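(* Consider an instance of the Profile Matching Problem (defined in the context). Fix a profile $\mathbf{a}\in Q_k$, let $\mathcal{M}_\mathbf{a}$ and $\mathcal{W}_\mathbf{a}$ be the sets of men and of women whose profile equals $\mathbf{a}$, and suppose $|\mathcal{M}_\mathbf{a}|\le|\mathcal{W}_\mathbf{a}|$. Then in every stable matching, each man in $\mathcal{M}_\mathbf{a}$ is matched to a woman in $\mathcal{W}_\mathbf{a}$.
   Context: Profile Matching Problem: a set $\mathcal{M}$ of $n$ men and a set $\mathcal{W}$ of $n$ women; each participant $x$ has a profile $\mathbf{a}(x)\in Q_k=\{0,1\}^k$. The distance $d$ on $Q_k$ is either the Hamming distance $d_h(\mathbf{a},\mathbf{a}')=\sum_{i=1}^k\mathbf{1}(a_i\ne a_i')$ or the Weighted Hamming distance $d_w(\mathbf{a},\mathbf{a}')=\sum_{i=1}^k2^{-i}\mathbf{1}(a_i\ne a_i')$; $d(x,y)=d(\mathbf{a}(x),\mathbf{a}(y))$. Each participant $x$ has a tie-breaking list $T_x$ (a strict order on the opposite sex); the strict preference list of $x$ ranks the opposite sex in increasing order of $d(x,\cdot)$, ties broken by $T_x$. A matching pairs each man with at most one woman and vice versa; $(m,w)$ is a blocking pair if each strictly prefers the other to his/her partner in the matching; a matching is stable if it has no blocking pair. *)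

theory Defs
  imports Complex_Main
begin

(* Profiles: elements of Q_k = {0,1}^k, represented as bool lists of length k.
   Coordinate i (1-based in the paper) is list index i-1. *)

definition hamming :: "bool list \<Rightarrow> bool list \<Rightarrow> real" where
  "hamming a b = real (card {i. i < length a \<and> a ! i \<noteq> b ! i})"

definition weighted_hamming :: "bool list \<Rightarrow> bool list \<Rightarrow> real" where
  "weighted_hamming a b = (\<Sum>i<length a. if a ! i \<noteq> b ! i then (1/2) ^ (i + 1) else 0)"

definition admissible_distance :: "(bool list \<Rightarrow> bool list \<Rightarrow> real) \<Rightarrow> bool" where
  "admissible_distance d \<longleftrightarrow> d = hamming \<or> d = weighted_hamming"

(* Strict preference of participant x over the opposite sex:
   x strictly prefers y to z iff d(x,y) < d(x,z), or equal distances and y comes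
   before z in the tie-breaking list T_x (T x is a rank function; smaller = earlier). *)
definition prefers ::
  "(bool list \<Rightarrow> bool list \<Rightarrow> real) \<Rightarrow> ('a \<Rightarrow> bool list) \<Rightarrow> ('a \<Rightarrow> 'a \<Rightarrow> nat)
   \<Rightarrow> 'a \<Rightarrow> 'a \<Rightarrow> 'a \<Rightarrow> bool" where
  "prefers d a T x y z \<longleftrightarrow>
     d (a x) (a y) < d (a x) (a z) \<or> (d (a x) (a y) = d (a x) (a z) \<and> T x y < T x z)"

definition prefers_to_partner ::
  "(bool list \<Rightarrow> bool list \<Rightarrow> real) \<Rightarrow> ('a \<Rightarrow> bool list) \<Rightarrow> ('a \<Rightarrow> 'a \<Rightarrow> nat)
   \<Rightarrow> 'a \<Rightarrow> 'a \<Rightarrow> 'a option \<Rightarrow> bool" where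
  "prefers_to_partner d a T x y p =
     (case p of None \<Rightarrow> True | Some z \<Rightarrow> prefers d a T x y z)"

definition is_matching :: "'a set \<Rightarrow> 'a set \<Rightarrow> ('a \<Rightarrow> 'a option) \<Rightarrow> bool" where
  "is_matching M W \<mu> \<longleftrightarrow>
     (\<forall>m\<in>M. \<forall>w. \<mu> m = Some w \<longrightarrow> w \<in> W \<and> \<mu> w = Some m) \<and>
     (\<forall>w\<in>W. \<forall>m. \<mu> w = Some m \<longrightarrow> m \<in> M \<and> \<mu> m = Some w) \<and>
     (\<forall>x. x \<notin> M \<union> W \<longrightarrow> \<mu> x = None)"

definition blocking_pair ::
  "(bool list \<Rightarrow> bool list \<Rightarrow> real) \<Rightarrow> ('a \<Rightarrow> bool list) \<Rightarrow> ('a \<Rightarrow> 'a \<Rightarrow> nat)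
   \<Rightarrow> ('a \<Rightarrow> 'a option) \<Rightarrow> 'a \<Rightarrow> 'a \<Rightarrow> bool" where
  "blocking_pair d a T \<mu> m w \<longleftrightarrow>
     prefers_to_partner d a T m w (\<mu> m) \<and> prefers_to_partner d a T w m (\<mu> w)"

definition stable_matching ::
  "(bool list \<Rightarrow> bool list \<Rightarrow> real) \<Rightarrow> ('a \<Rightarrow> bool list) \<Rightarrow> ('a \<Rightarrow> 'a \<Rightarrow> nat)
   \<Rightarrow> 'a set \<Rightarrow> 'a set \<Rightarrow> ('a \<Rightarrow> 'a option) \<Rightarrow> bool" where
  "stable_matching d a T M W \<mu> \<longleftrightarrow>
     is_matching M W \<mu> \<and> (\<forall>m\<in>M. \<forall>w\<in>W. \<not> blocking_pair d a T \<mu> m w)"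

definition pm_instance ::
  "nat \<Rightarrow> ('a \<Rightarrow> bool list) \<Rightarrow> ('a \<Rightarrow> 'a \<Rightarrow> nat) \<Rightarrow> 'a set \<Rightarrow> 'a set \<Rightarrow> bool" where
  "pm_instance k a T M W \<longleftrightarrow>
     finite M \<and> finite W \<and> M \<inter> W = {} \<and> card M = card W \<and>
     (\<forall>x\<in>M \<union> W. length (a x) = k) \<and>
     (\<forall>m\<in>M. inj_on (T m) W) \<and> (\<forall>w\<in>W. inj_on (T w) M)"

end

theory Submission
  imports Defs
begin

lemma d_self: "admissible_distance d \<Longrightarrow> d x x = 0"
  by (auto simp: admissible_distance_def hamming_def weighted_hamming_def)

lemma d_pos:
  assumes "admissible_distance d" "length x = length y" "x \<noteq> y"
  shows "d x y > 0"
proof -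
  obtain i where i: "i < length x" "x ! i \<noteq> y ! i"
    using assms(2,3) nth_equalityI by blast
  show ?thesis
  proof (cases "d = hamming")
    case True
    have "{i. i < length x \<and> x ! i \<noteq> y ! i} \<noteq> {}" using i by blast
    then have "card {i. i < length x \<and> x ! i \<noteq> y ! i} > 0" by (simp add: card_gt_0_iff)
    then show ?thesis using True by (simp add: hamming_def)
  next
    case False
    then have dw: "d = weighted_hamming" using assms(1) by (simp add: admissible_distance_def)
    have "(\<Sum>j<length x. if x ! j \<noteq> y ! j then (1/2::real) ^ (j + 1) else 0)
          \<ge> (if x ! i \<noteq> y ! i then (1/2::real) ^ (i + 1) else 0)"
      by (rule member_le_sum) (use i in auto)
    moreover have "(if x ! i \<noteq> y ! i then (1/2::real) ^ (i + 1) else 0) > 0" using i by simp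
    ultimately show ?thesis using dw by (simp add: weighted_hamming_def)
  qed
qed

theorem lemmaA1:
  fixes k :: nat and d :: "bool list \<Rightarrow> bool list \<Rightarrow> real"
    and a :: "'a \<Rightarrow> bool list" and T :: "'a \<Rightarrow> 'a \<Rightarrow> nat"
    and M W :: "'a set" and p :: "bool list" and \<mu> :: "'a \<Rightarrow> 'a option"
  assumes "pm_instance k a T M W"
    and "admissible_distance d"
    and "length p = k"
    and "card {m\<in>M. a m = p} \<le> card {w\<in>W. a w = p}"
    and "stable_matching d a T M W \<mu>"
  shows "\<forall>m\<in>{m\<in>M. a m = p}. \<exists>w\<in>{w\<in>W. a w = p}. \<mu> m = Some w"
proof (rule ballI, rule ccontr)
  fix m0 assume m0: "m0 \<in> {m\<in>M. a m = p}"
    and nm: "\<not> (\<exists>w\<in>{w\<in>W. a w = p}. \<mu> m0 = Some w)"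
  have inst: "finite M" "finite W" "\<forall>x\<in>M \<union> W. length (a x) = k"
    using assms(1) by (auto simp: pm_instance_def)
  have mat: "is_matching M W \<mu>" and nb: "\<forall>m\<in>M. \<forall>w\<in>W. \<not> blocking_pair d a T \<mu> m w"
    using assms(5) by (auto simp: stable_matching_def)
  have dz: "\<And>x. d x x = 0" using d_self[OF assms(2)] .
  have dp: "\<And>x. x \<in> M \<union> W \<Longrightarrow> a x \<noteq> p \<Longrightarrow> d p (a x) > 0"
    using d_pos[OF assms(2)] inst(3) assms(3) by auto
  have dp': "\<And>x. x \<in> M \<union> W \<Longrightarrow> a x \<noteq> p \<Longrightarrow> d p (a x) > 0" using dp .
  have key: "\<exists>m. \<mu> w = Some m \<and> m \<in> M \<and> a m = p \<and> \<mu> m = Some w \<and> m \<noteq> m0"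
    if w: "w \<in> W" "a w = p" for w
  proof -
    have pm: "prefers_to_partner d a T m0 w (\<mu> m0)"
    proof (cases "\<mu> m0")
      case None then show ?thesis by (simp add: prefers_to_partner_def)
    next
      case (Some z)
      have "z \<in> W" using mat m0 Some unfolding is_matching_def by blast
      moreover have "a z \<noteq> p" using nm Some \<open>z \<in> W\<close> by auto
      ultimately have "d p (a z) > 0" using dp by auto
      then show ?thesis using Some m0 w dz by (simp add: prefers_to_partner_def prefers_def)
    qed
    have "\<not> prefers_to_partner d a T w m0 (\<mu> w)"
      using nb m0 w pm by (auto simp: blocking_pair_def)
    then obtain m where mw: "\<mu> w = Some m" and np: "\<not> prefers d a T w m0 m"
      by (cases "\<mu> w") (auto simp: prefers_to_partner_def)
    have mM: "m \<in> M" "\<mu> m = Some w"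
      using mat w(1) mw unfolding is_matching_def by blast+
    have "a m = p"
    proof (rule ccontr)
      assume "a m \<noteq> p"
      then have "d p (a m) > 0" using dp mM by auto
      then show False using np m0 w dz by (simp add: prefers_def)
    qed
    moreover have "m \<noteq> m0" using nm mM w by auto
    ultimately show ?thesis using mw mM by auto
  qed
  define f where "f w = the (\<mu> w)" for w
  have inj: "inj_on f {w\<in>W. a w = p}"
  proof (rule inj_onI)
    fix x y assume x: "x \<in> {w\<in>W. a w = p}" and y: "y \<in> {w\<in>W. a w = p}" and e: "f x = f y"
    obtain mx where "\<mu> x = Some mx" "\<mu> mx = Some x" using key x by blast
    moreover obtain my where "\<mu> y = Some my" "\<mu> my = Some y" using key y by blast
    ultimately show "x = y" using e by (simp add: f_def)
  qed
  have img: "f ` {w\<in>W. a w = p} \<subseteq> {m\<in>M. a m = p} - {m0}"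
    using key by (force simp: f_def)
  have "card {w\<in>W. a w = p} \<le> card ({m\<in>M. a m = p} - {m0})"
    by (rule card_inj_on_le[OF inj img]) (use inst in auto)
  also have "\<dots> < card {m\<in>M. a m = p}"
    using m0 inst by (intro card_Diff1_less) auto
  finally show False using assms(4) by simp
qed

end
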